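(* Let $(X, Y, f, g)$ be a min-max Stackelberg game satisfying the Standing Assumption below. Suppose the outer player plays a sequence of strategies $x^{(1)}, \dots, x^{(T)} \in X$, and suppose that after $T$ iterations the outer player's asymmetric regret is at most $\varepsilon$: $$\max_{x \in X}\left[\frac{1}{T}\sum_{t=1}^T V(x^{(t)}) - \frac{1}{T}\sum_{t=1}^T V(x)\right] \le \varepsilon .$$ Let $\bar{x}^{(T)} = \frac{1}{T}\sum_{t=1}^T x^{(t)}$ and let $y^*(\bar{x}^{(T)}) \in \arg\max_{y \in Y : g(\bar{x}^{(T)}, y) \ge 0} f(\bar{x}^{(T)}, y)$. Then $(\bar{x}^{(T)}, y^*(\bar{x}^{(T)}))$ is an $(\varepsilon, 0)$-Stackelberg equilibrium.
   Context: A min-max Stackelberg game $(X, Y, f, g)$ consists of non-empty compact convex sets $X \subset \mathbb{R}^n$, $Y \subset \mathbb{R}^m$, a continuous objective $f: X \times Y \to \mathbb{R}$, and continuous constraint functions $g = (g_1, \dots, g_K)$, $g_k : X \times Y \to \mathbb{R}$; the game is $\min_{x \in X} \max_{y \in Y : g(x,y) \ge 0} f(x,y)$ (inequalities componentwise). The outer player's value function is $V(x) = \max_{y \in Y : g(x,y) \ge 0} f(x,y)$. A strategy profile $(x^*, y^* ) \in X \times Y$ with $g(x^*, y^* ) \ge 0$ is an $(\epsilon, \delta)$-Stackelberg equilibrium if $\max_{y \in Y : g(x^*, y) \ge 0} f(x^*, y) - \delta \le f(x^*, y^* ) \le \min_{x \in X} \max_{y \in Y : g(x,y) \ge 0} f(x,y)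 + \epsilon$. Standing Assumption: (1) (Slater) for every $x \in X$ there is $\hat y \in Y$ with $g_k(x, \hat y) > 0$ for all $k$; (2) $\nabla_x f, \nabla_x g_1, \dots, \nabla_x g_K$ exist and are continuous; (3a) $f$ is continuous, convex in $x$ and concave in $y$; (3b) for each $k$, the map $(\mu, x, y) \mapsto \mu g_k(x,y)$ is continuous, convex in $(\mu, x)$ over $\mathbb{R}_+ \times X$ for every $y \in Y$, and concave in $y$ over $Y$ for every $(\mu, x) \in \mathbb{R}_+ \times X$. *)

theory Defs
  imports "HOL-Analysis.Analysis"
begin

definition feasible :: "nat \<Rightarrow> (nat \<Rightarrow> 'a \<Rightarrow> 'b \<Rightarrow> real) \<Rightarrow> 'b set \<Rightarrow> 'a \<Rightarrow> 'b set" where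
  "feasible K g Y x = {y \<in> Y. \<forall>k<K. g k x y \<ge> 0}"

definition val :: "('a \<Rightarrow> 'b \<Rightarrow> real) \<Rightarrow> nat \<Rightarrow> (nat \<Rightarrow> 'a \<Rightarrow> 'b \<Rightarrow> real) \<Rightarrow> 'b set \<Rightarrow> 'a \<Rightarrow> real" where
  "val f K g Y x = (SUP y \<in> feasible K g Y x. f x y)"

definition stackelberg_eq ::
  "'a set \<Rightarrow> 'b set \<Rightarrow> ('a \<Rightarrow> 'b \<Rightarrow> real) \<Rightarrow> nat \<Rightarrow> (nat \<Rightarrow> 'a \<Rightarrow> 'b \<Rightarrow> real)
   \<Rightarrow> real \<Rightarrow> real \<Rightarrow> 'a \<Rightarrow> 'b \<Rightarrow> bool" where
  "stackelberg_eq X Y f K g eps delta xs ys \<longleftrightarrow>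
     xs \<in> X \<and> ys \<in> feasible K g Y xs \<and>
     val f K g Y xs - delta \<le> f xs ys \<and>
     f xs ys \<le> (INF x \<in> X. val f K g Y x) + eps"

definition standing_assumption ::
  "'a::euclidean_space set \<Rightarrow> 'b::euclidean_space set \<Rightarrow> ('a \<Rightarrow> 'b \<Rightarrow> real) \<Rightarrow> nat
   \<Rightarrow> (nat \<Rightarrow> 'a \<Rightarrow> 'b \<Rightarrow> real) \<Rightarrow> bool" where
  "standing_assumption X Y f K g \<longleftrightarrow>
     X \<noteq> {} \<and> compact X \<and> convex X \<and>
     Y \<noteq> {} \<and> compact Y \<and> convex Y \<and>
     continuous_on (X \<times> Y) (\<lambda>(x, y). f x y) \<and>
     (\<forall>k<K. continuous_on (X \<times> Y) (\<lambda>(x, y). g k x y)) \<and>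
     \<comment> \<open>(1) Slater\<close>
     (\<forall>x\<in>X. \<exists>y\<in>Y. \<forall>k<K. g k x y > 0) \<and>
     \<comment> \<open>(2) continuous partial gradients in x\<close>
     (\<exists>Gf :: 'a \<Rightarrow> 'b \<Rightarrow> 'a.
        (\<forall>x\<in>X. \<forall>y\<in>Y. ((\<lambda>x'. f x' y) has_derivative (\<lambda>h. Gf x y \<bullet> h)) (at x within X)) \<and>
        continuous_on (X \<times> Y) (\<lambda>(x, y). Gf x y)) \<and>
     (\<forall>k<K. \<exists>Gg :: 'a \<Rightarrow> 'b \<Rightarrow> 'a.
        (\<forall>x\<in>X. \<forall>y\<in>Y. ((\<lambda>x'. g k x' y) has_derivative (\<lambda>h. Gg x y \<bullet> h)) (at x within X)) \<and>
        continuous_on (X \<times> Y) (\<lambda>(x, y). Gg x y)) \<and>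
     \<comment> \<open>(3a) convex-concave objective\<close>
     (\<forall>y\<in>Y. convex_on X (\<lambda>x. f x y)) \<and>
     (\<forall>x\<in>X. concave_on Y (\<lambda>y. f x y)) \<and>
     \<comment> \<open>(3b)\<close>
     (\<forall>k<K. continuous_on ({0..} \<times> X \<times> Y) (\<lambda>(\<mu>, x, y). \<mu> * g k x y)) \<and>
     (\<forall>k<K. \<forall>y\<in>Y. convex_on ({0..} \<times> X) (\<lambda>(\<mu>, x). \<mu> * g k x y)) \<and>
     (\<forall>k<K. \<forall>\<mu>\<ge>0. \<forall>x\<in>X. concave_on Y (\<lambda>y. \<mu> * g k x y))"

end

theory Submission
  imports Defs
begin

theorem mainTheorem1:
  fixes X :: "'a::euclidean_space set" and Y :: "'b::euclidean_space set"
    and f :: "'a \<Rightarrow> 'b \<Rightarrow> real" and K :: nat and g :: "nat \<Rightarrow> 'a \<Rightarrow> 'b \<Rightarrow> real"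
    and T :: nat and xs :: "nat \<Rightarrow> 'a" and eps :: real and ystar :: 'b
  assumes SA: "standing_assumption X Y f K g"
    and T: "T \<ge> 1"
    and xs_in: "\<forall>t\<in>{1..T}. xs t \<in> X"
    and regret: "\<forall>x\<in>X. (1 / real T) * (\<Sum>t=1..T. val f K g Y (xs t)) - (1 / real T) * (\<Sum>t=1..T. val f K g Y x) \<le> eps"
    and ystar: "ystar \<in> feasible K g Y ((1 / real T) *\<^sub>R (\<Sum>t=1..T. xs t))"
    and ystar_max: "\<forall>y \<in> feasible K g Y ((1 / real T) *\<^sub>R (\<Sum>t=1..T. xs t)).
                      f ((1 / real T) *\<^sub>R (\<Sum>t=1..T. xs t)) y \<le> f ((1 / real T) *\<^sub>R (\<Sum>t=1..T. xs t)) ystar"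
  shows "stackelberg_eq X Y f K g eps 0 ((1 / real T) *\<^sub>R (\<Sum>t=1..T. xs t)) ystar"
proof -
  define xb where "xb = (1 / real T) *\<^sub>R (\<Sum>t=1..T. xs t)"
  define S where "S = {1..T}"
  define a where "a = (\<lambda>t::nat. 1 / real T)"
  have fin: "finite S" and Sne: "S \<noteq> {}" using T by (auto simp: S_def)
  have Tpos: "real T > 0" using T by simp
  have suma: "(\<Sum>i\<in>S. a i) = 1" using Tpos by (simp add: a_def S_def)
  have anonneg: "\<And>i. i \<in> S \<Longrightarrow> a i \<ge> 0" by (simp add: a_def)
  have xsX: "\<And>i. i \<in> S \<Longrightarrow> xs i \<in> X" using xs_in by (simp add: S_def)
  have xb_eq: "xb = (\<Sum>i\<in>S. a i *\<^sub>R xs i)"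
    by (simp add: xb_def a_def S_def scaleR_sum_right)
  have cX: "convex X" and cY: "compact Y" and cXc: "compact X" and Xne: "X \<noteq> {}"
    and fcont: "continuous_on (X \<times> Y) (\<lambda>(x, y). f x y)"
    and fconv: "\<forall>y\<in>Y. convex_on X (\<lambda>x. f x y)"
    and gconv: "\<forall>k<K. \<forall>y\<in>Y. convex_on ({0..} \<times> X) (\<lambda>(\<mu>, x). \<mu> * g k x y)"
    using SA unfolding standing_assumption_def by auto
  have xbX: "xb \<in> X" unfolding xb_eq by (rule convex_sum[OF fin cX suma anonneg xsX])
  have transfer: "g k (xs t0) y \<ge> 0" if k: "k < K" and y: "y \<in> Y" and t0: "t0 \<in> S"
      and gb: "g k xb y \<ge> 0" for k y t0
  proof -
    define p where "p = (\<lambda>i. (if i = t0 then 1 else 0 :: real, xs i))"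
    have "(\<lambda>(\<mu>, x). \<mu> * g k x y) (\<Sum>i\<in>S. a i *\<^sub>R p i) \<le> (\<Sum>i\<in>S. a i * (\<lambda>(\<mu>, x). \<mu> * g k x y) (p i))"
      apply (rule convex_on_sum[OF fin Sne _ suma anonneg])
      using gconv k y apply blast
      using xsX by (auto simp: p_def)
    moreover have "(\<Sum>i\<in>S. a i *\<^sub>R p i) = (1 / real T, xb)"
    proof -
      have "fst (\<Sum>i\<in>S. a i *\<^sub>R p i) = (\<Sum>i\<in>S. a i * (if i = t0 then 1 else 0))"
        by (simp add: fst_sum p_def)
      also have "\<dots> = 1 / real T" using t0 fin by (simp add: a_def if_distrib sum.delta cong: if_cong)
      finally have 1: "fst (\<Sum>i\<in>S. a i *\<^sub>R p i) = 1 / real T" .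
      have 2: "snd (\<Sum>i\<in>S. a i *\<^sub>R p i) = xb" by (simp add: snd_sum p_def xb_eq)
      show ?thesis using 1 2 by (simp add: prod_eq_iff)
    qed
    moreover have "(\<Sum>i\<in>S. a i * (\<lambda>(\<mu>, x). \<mu> * g k x y) (p i)) = (\<Sum>i\<in>S. if i = t0 then (1 / real T) * g k (xs t0) y else 0)"
      by (rule sum.cong) (auto simp: p_def a_def)
    moreover have "(\<Sum>i\<in>S. if i = t0 then (1 / real T) * g k (xs t0) y else 0) = (1 / real T) * g k (xs t0) y"
      using t0 fin by (simp add: sum.delta)
    ultimately have "(1 / real T) * g k xb y \<le> (1 / real T) * g k (xs t0) y" by simp
    hence "g k xb y \<le> g k (xs t0) y" using Tpos by (simp add: divide_right_mono_neg divide_le_cancel)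
    with gb show ?thesis by simp
  qed
  have bdd: "bdd_above ((\<lambda>y. f x y) ` A)" if "x \<in> X" "A \<subseteq> Y" for x A
  proof -
    have "compact ((\<lambda>(x, y). f x y) ` (X \<times> Y))"
      by (rule compact_continuous_image[OF fcont]) (simp add: compact_Times cXc cY)
    hence "bdd_above ((\<lambda>(x, y). f x y) ` (X \<times> Y))" by (simp add: bounded_imp_bdd_above compact_imp_bounded)
    then show ?thesis by (rule bdd_above_mono) (use that in auto)
  qed
  have ystY: "ystar \<in> Y" and ystF: "\<forall>k<K. g k xb ystar \<ge> 0"
    using ystar by (auto simp: feasible_def xb_def)
  have feas_t: "ystar \<in> feasible K g Y (xs t)" if "t \<in> S" for t
    using transfer[OF _ ystY that] ystF ystY by (auto simp: feasible_def)
  have upper: "f xb ystar \<le> val f K g Y x + eps" if x: "x \<in> X" for x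
  proof -
    have "f xb ystar \<le> (\<Sum>i\<in>S. a i * f (xs i) ystar)"
      unfolding xb_eq by (rule convex_on_sum[OF fin Sne _ suma anonneg xsX]) (use fconv ystY in blast)
    also have "\<dots> \<le> (\<Sum>i\<in>S. a i * val f K g Y (xs i))"
    proof (rule sum_mono)
      fix i assume i: "i \<in> S"
      have "f (xs i) ystar \<le> val f K g Y (xs i)"
        unfolding val_def
        by (rule cSUP_upper[OF feas_t[OF i] bdd[OF xsX[OF i]]]) (auto simp: feasible_def)
      then show "a i * f (xs i) ystar \<le> a i * val f K g Y (xs i)"
        using anonneg[OF i] by (simp add: mult_left_mono)
    qed
    also have "\<dots> = (1 / real T) * (\<Sum>t=1..T. val f K g Y (xs t))"
      by (simp add: a_def S_def sum_distrib_left)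
    also have "\<dots> \<le> (1 / real T) * (\<Sum>t=1..T. val f K g Y x) + eps"
      using regret x by force
    also have "(1 / real T) * (\<Sum>t=1..T. val f K g Y x) = val f K g Y x"
      using Tpos by simp
    finally show ?thesis .
  qed
  have "f xb ystar - eps \<le> (INF x \<in> X. val f K g Y x)"
    by (rule cINF_greatest[OF Xne]) (use upper in force)
  moreover have "val f K g Y xb \<le> f xb ystar"
    unfolding val_def
    by (rule cSUP_least) (use ystar ystar_max in \<open>auto simp: xb_def\<close>)
  ultimately show ?thesis
    using xbX ystar unfolding stackelberg_eq_def xb_def[symmetric] by auto
qed

end
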